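(* Let $n,\lambda,\mu$ be positive integers with $\mu>\lambda$, and let $\mathcal{A}$ be a path decomposition of $\lambda K_n$. Then $\lambda K_n$ is $1$-extendible with respect to $(\mathcal{A},\mu K_n)$ if and only if $|\mathcal{S}_0(\mathcal{A})|\le(\mu-\lambda)\frac{n(n-1)}{2}$. Moreover, if $\mathcal{A}$ is strong and this inequality holds, then $\lambda K_n$ is strongly $1$-extendible with respect to $(\mathcal{A},\mu K_n)$.
   Context: Graphs may have multiple edges. $\lambda K_n$ is the loopless multigraph on $n$ vertices with every pair of distinct vertices joined by exactly $\lambda$ edges; $\lambda K_n$ is regarded as a subgraph of $\mu K_n$ on the same vertex set, and $\mu K_n\setminus\lambda K_n$ denotes the graph obtained by deleting the edges of $\lambda K_n$. A decomposition of size $k$ of a graph $G$ is an ordered $k$-tuple $(G(1),\dots,G(k))$ of spanning subgraphs of $G$ (colour classes; possibly edgeless) with pairwise disjoint edge sets whose union is $E(G)$. A path decomposition is one in which every colour class is a vertex-disjoint union of paths and cycles (two parallel edges form a cycle of length 2); it is strong if no colour class contains a cycle. $\mathcal{S}_i(\mathcal{A})$ is the set of colour classes of $\mathcal{A}$ with exactly $i$ edges. For a graph $G\subseteq H$, a path decomposition $\mathcal{A}$ of $G$ with $k$ colour classes and a positive integer $\alpha$, $G$ is $\alpha$-extendible with respect to $(\mathcal{A},H)$ if there is a graph $F\subseteq H\setminus G$ and a path decomposition $\mathcal{A}^*$ of $G\cup F$ of size $k$ whose restriction to $G$ is $\mathcal{A}$ (i.e. $\mathcal{A}^*(i)\cap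 E(G)=\mathcal{A}(i)$ for all $i$) and each $\mathcal{A}^*(i)$ has at least $\alpha$ edges; it is strongly $\alpha$-extendible if moreover $\mathcal{A}$ and $\mathcal{A}^*$ are strong path decompositions. *)

theory Defs
  imports Main
begin

text \<open>Edges of the multigraph mu K_n on vertex set {0..<n}: an edge is a triple (u,v,j)
  with u < v < n and j < mu; j labels the j-th parallel copy of uv.  lambda K_n is the
  subgraph consisting of the copies with j < lambda.\<close>

type_synonym edge = "nat \<times> nat \<times> nat"

definition ends :: "edge \<Rightarrow> nat set" where
  "ends e = (case e of (u, v, j) \<Rightarrow> {u, v})"

definition Kn :: "nat \<Rightarrow> nat \<Rightarrow> edge set" where
  "Kn lam n = {(u, v, j). u < v \<and> v < n \<and> j < lam}"

definition verts :: "edge set \<Rightarrow> nat set" where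
  "verts X = \<Union> (ends ` X)"

definition is_path_edges :: "edge set \<Rightarrow> bool" where
  "is_path_edges X \<longleftrightarrow> (\<exists>vs es. length es \<ge> 1 \<and> length vs = Suc (length es) \<and>
     distinct vs \<and> distinct es \<and> set es = X \<and>
     (\<forall>i < length es. ends (es ! i) = {vs ! i, vs ! Suc i}))"

text \<open>X is the edge set of a cycle (length at least 2; two parallel edges form a 2-cycle).\<close>
definition is_cycle_edges :: "edge set \<Rightarrow> bool" where
  "is_cycle_edges X \<longleftrightarrow> (\<exists>vs es. length es \<ge> 2 \<and> length vs = length es \<and>
     distinct vs \<and> distinct es \<and> set es = X \<and>
     (\<forall>i < length es. ends (es ! i) = {vs ! i, vs ! (Suc i mod length vs)}))"

text \<open>The graph with edge set C is a vertex-disjoint union of paths and cycles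
  (isolated vertices are trivial paths and need not be listed).\<close>
definition paths_cycles_union :: "edge set \<Rightarrow> bool" where
  "paths_cycles_union C \<longleftrightarrow> (\<exists>P. finite P \<and> \<Union>P = C \<and>
     (\<forall>X\<in>P. is_path_edges X \<or> is_cycle_edges X) \<and>
     (\<forall>X\<in>P. \<forall>Y\<in>P. X \<noteq> Y \<longrightarrow> verts X \<inter> verts Y = {}))"

definition contains_cycle :: "edge set \<Rightarrow> bool" where
  "contains_cycle C \<longleftrightarrow> (\<exists>X \<subseteq> C. is_cycle_edges X)"

definition decomposition :: "edge set \<Rightarrow> nat \<Rightarrow> (nat \<Rightarrow> edge set) \<Rightarrow> bool" where
  "decomposition G k A \<longleftrightarrow> (\<forall>i<k. A i \<subseteq> G) \<and>
     (\<forall>i<k. \<forall>j<k. i \<noteq> j \<longrightarrow> A i \<inter> A j = {}) \<and> (\<Union>i<k. A i) = G"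

definition path_decomposition :: "edge set \<Rightarrow> nat \<Rightarrow> (nat \<Rightarrow> edge set) \<Rightarrow> bool" where
  "path_decomposition G k A \<longleftrightarrow> decomposition G k A \<and> (\<forall>i<k. paths_cycles_union (A i))"

definition strong_path_decomposition :: "edge set \<Rightarrow> nat \<Rightarrow> (nat \<Rightarrow> edge set) \<Rightarrow> bool" where
  "strong_path_decomposition G k A \<longleftrightarrow> path_decomposition G k A \<and> (\<forall>i<k. \<not> contains_cycle (A i))"

definition S_card :: "nat \<Rightarrow> nat \<Rightarrow> (nat \<Rightarrow> edge set) \<Rightarrow> nat" where
  "S_card s k A = card {i. i < k \<and> card (A i) = s}"

definition extendible ::
  "nat \<Rightarrow> edge set \<Rightarrow> edge set \<Rightarrow> nat \<Rightarrow> (nat \<Rightarrow> edge set) \<Rightarrow> bool" where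
  "extendible \<alpha> G H k A \<longleftrightarrow> (\<exists>F A'. F \<subseteq> H - G \<and> path_decomposition (G \<union> F) k A' \<and>
     (\<forall>i<k. A' i \<inter> G = A i) \<and> (\<forall>i<k. \<alpha> \<le> card (A' i)))"

definition strongly_extendible ::
  "nat \<Rightarrow> edge set \<Rightarrow> edge set \<Rightarrow> nat \<Rightarrow> (nat \<Rightarrow> edge set) \<Rightarrow> bool" where
  "strongly_extendible \<alpha> G H k A \<longleftrightarrow> strong_path_decomposition G k A \<and>
     (\<exists>F A'. F \<subseteq> H - G \<and> strong_path_decomposition (G \<union> F) k A' \<and>
     (\<forall>i<k. A' i \<inter> G = A i) \<and> (\<forall>i<k. \<alpha> \<le> card (A' i)))"

end

theory Submission
  imports Defs
begin

lemma Kn_sub: "Kn m n \<subseteq> {..<n} \<times> {..<n} \<times> {..<m}"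
  by (auto simp: Kn_def)

lemma Kn_finite: "finite (Kn m n)"
  using Kn_sub finite_subset by blast

lemma card_pairs: "card {(u::nat, v). u < v \<and> v < n} = n * (n - 1) div 2"
proof (induction n)
  case 0 then show ?case by simp
next
  case (Suc n)
  have eq: "{(u::nat, v). u < v \<and> v < Suc n} = {(u, v). u < v \<and> v < n} \<union> (\<lambda>u. (u, n)) ` {..<n}"
    by auto
  have fin: "finite {(u::nat, v). u < v \<and> v < n}"
    by (rule finite_subset[of _ "{..<n} \<times> {..<n}"]) auto
  have "card {(u::nat, v). u < v \<and> v < Suc n} = card {(u::nat, v). u < v \<and> v < n} + card ((\<lambda>u. (u, n)) ` {..<n})"
    unfolding eq by (rule card_Un_disjoint) (use fin in auto)
  also have "card ((\<lambda>u. (u, n)) ` {..<n}) = n"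
    by (subst card_image) (auto simp: inj_on_def)
  finally have "card {(u::nat, v). u < v \<and> v < Suc n} = n * (n - 1) div 2 + n" using Suc by simp
  also have "\<dots> = Suc n * (Suc n - 1) div 2"
  proof -
    have "Suc n * (Suc n - 1) = n * (n - 1) + 2 * n" by (cases n) (auto simp: algebra_simps)
    then show ?thesis by simp
  qed
  finally show ?case .
qed

lemma card_diff: "lam \<le> mu \<Longrightarrow> card (Kn mu n - Kn lam n) = (mu - lam) * (n * (n - 1) div 2)"
proof -
  assume "lam \<le> mu"
  have eq: "Kn mu n - Kn lam n = (\<lambda>((u, v), j). (u, v, j)) ` ({(u, v). u < v \<and> v < n} \<times> {lam..<mu})"
    by (auto simp: Kn_def image_iff)
  have fin: "finite {(u::nat, v). u < v \<and> v < n}"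
    by (rule finite_subset[of _ "{..<n} \<times> {..<n}"]) auto
  have "card (Kn mu n - Kn lam n) = card ({(u::nat, v). u < v \<and> v < n} \<times> {lam..<mu})"
    unfolding eq by (rule card_image) (auto simp: inj_on_def)
  also have "\<dots> = (n * (n - 1) div 2) * (mu - lam)"
    by (simp add: card_cartesian_product card_pairs)
  finally show ?thesis by simp
qed

lemma single_pcu: "e \<in> Kn m n \<Longrightarrow> paths_cycles_union {e}"
proof -
  assume "e \<in> Kn m n"
  then obtain u v j where e: "e = (u, v, j)" "u < v" by (auto simp: Kn_def)
  have "is_path_edges {e}"
    unfolding is_path_edges_def
    by (rule exI[of _ "[u, v]"], rule exI[of _ "[e]"]) (use e in \<open>auto simp: ends_def\<close>)
  then show ?thesis unfolding paths_cycles_union_def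
    by (intro exI[of _ "{{e}}"]) auto
qed

lemma single_nocycle: "\<not> contains_cycle {e}"
proof
  assume "contains_cycle {e}"
  then obtain X where X: "X \<subseteq> {e}" "is_cycle_edges X" by (auto simp: contains_cycle_def)
  then obtain es where "length es \<ge> 2" "distinct es" "set es = X"
    by (auto simp: is_cycle_edges_def)
  then have "card X \<ge> 2" using distinct_card by fastforce
  moreover have "card X \<le> 1" using X(1) card_mono[of "{e}" X] by simp
  ultimately show False by simp
qed

theorem proposition1:
  fixes n lam mu k :: nat and A :: "nat \<Rightarrow> edge set"
  assumes "n > 0" and "lam > 0" and "mu > lam"
    and "path_decomposition (Kn lam n) k A"
  shows "(extendible 1 (Kn lam n) (Kn mu n) k A \<longleftrightarrow>
            S_card 0 k A \<le> (mu - lam) * (n * (n - 1) div 2))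
       \<and> (strong_path_decomposition (Kn lam n) k A \<and>
            S_card 0 k A \<le> (mu - lam) * (n * (n - 1) div 2)
          \<longrightarrow> strongly_extendible 1 (Kn lam n) (Kn mu n) k A)"
proof -
  let ?G = "Kn lam n" and ?D = "Kn mu n - Kn lam n"
  define Z where "Z = {i. i < k \<and> card (A i) = 0}"
  have SZ: "S_card 0 k A = card Z" by (simp add: S_card_def Z_def)
  have cD: "card ?D = (mu - lam) * (n * (n - 1) div 2)" using card_diff assms(3) by simp
  have dec: "\<forall>i<k. A i \<subseteq> ?G" "\<forall>i<k. \<forall>j<k. i \<noteq> j \<longrightarrow> A i \<inter> A j = {}" "(\<Union>i<k. A i) = ?G"
    "\<forall>i<k. paths_cycles_union (A i)"
    using assms(4) by (auto simp: path_decomposition_def decomposition_def)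
  have finA: "\<And>i. i < k \<Longrightarrow> finite (A i)" using dec(1) Kn_finite finite_subset by blast
  have Zempty: "\<And>i. i \<in> Z \<Longrightarrow> A i = {}" using finA by (auto simp: Z_def)
  have finZ: "finite Z" by (simp add: Z_def)
  have finD: "finite ?D" using Kn_finite by simp
  have fwd: "extendible 1 ?G (Kn mu n) k A \<Longrightarrow> card Z \<le> card ?D"
  proof -
    assume "extendible 1 ?G (Kn mu n) k A"
    then obtain F A' where F: "F \<subseteq> Kn mu n - ?G" and pd: "path_decomposition (?G \<union> F) k A'"
      and res: "\<forall>i<k. A' i \<inter> ?G = A i" and cd: "\<forall>i<k. 1 \<le> card (A' i)"
      by (auto simp: extendible_def)
    have sub: "\<forall>i<k. A' i \<subseteq> ?G \<union> F" and dj: "\<forall>i<k. \<forall>j<k. i \<noteq> j \<longrightarrow> A' i \<inter> A' j = {}"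
      using pd by (auto simp: path_decomposition_def decomposition_def)
    have ne: "\<And>i. i \<in> Z \<Longrightarrow> \<exists>x. x \<in> A' i \<and> x \<in> F"
    proof -
      fix i assume iZ: "i \<in> Z"
      then have ik: "i < k" by (simp add: Z_def)
      have "A' i \<noteq> {}" using cd ik by (metis card.empty not_one_le_zero)
      then obtain x where x: "x \<in> A' i" by blast
      have "x \<notin> ?G" using res ik Zempty[OF iZ] x by blast
      then show "\<exists>x. x \<in> A' i \<and> x \<in> F" using x sub ik by blast
    qed
    define f where "f i = (SOME x. x \<in> A' i \<and> x \<in> F)" for i
    have fp: "\<And>i. i \<in> Z \<Longrightarrow> f i \<in> A' i \<and> f i \<in> F"
      unfolding f_def using ne by (rule someI_ex)
    have "inj_on f Z"
    proof (rule inj_onI)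
      fix i j assume "i \<in> Z" "j \<in> Z" "f i = f j"
      then show "i = j"
      proof (rule_tac ccontr)
        assume ij: "i \<in> Z" "j \<in> Z" "f i = f j" "i \<noteq> j"
        have "i < k" "j < k" using ij by (auto simp: Z_def)
        then have "A' i \<inter> A' j = {}" using dj ij(4) by blast
        moreover have "f i \<in> A' i" "f i \<in> A' j" using fp[OF ij(1)] fp[OF ij(2)] ij(3) by auto
        ultimately show False by blast
      qed
    qed
    moreover have "f ` Z \<subseteq> ?D" using fp F by blast
    ultimately show "card Z \<le> card ?D" using card_inj_on_le finD by blast
  qed
  have bwd: "\<exists>F A'. F \<subseteq> Kn mu n - ?G \<and> path_decomposition (?G \<union> F) k A' \<and>
     (\<forall>i<k. A' i \<inter> ?G = A i) \<and> (\<forall>i<k. 1 \<le> card (A' i)) \<and>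
     ((\<forall>i<k. \<not> contains_cycle (A i)) \<longrightarrow> (\<forall>i<k. \<not> contains_cycle (A' i)))"
    if le: "card Z \<le> card ?D"
  proof -
    obtain g where g: "g ` Z \<subseteq> ?D" "inj_on g Z" using card_le_inj[OF finZ finD le] by blast
    define F where "F = g ` Z"
    define A' where "A' i = (if i \<in> Z then {g i} else A i)" for i
    have gD: "\<And>i. i \<in> Z \<Longrightarrow> g i \<in> Kn mu n \<and> g i \<notin> ?G" using g(1) by auto
    have Zk: "\<And>i. i \<in> Z \<Longrightarrow> i < k" by (simp add: Z_def)
    have d1: "\<forall>i<k. A' i \<subseteq> ?G \<union> F" using dec(1) by (auto simp: A'_def F_def)
    have d2: "\<forall>i<k. \<forall>j<k. i \<noteq> j \<longrightarrow> A' i \<inter> A' j = {}"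
    proof (intro allI impI)
      fix i j assume ij: "i < k" "j < k" "i \<noteq> j"
      show "A' i \<inter> A' j = {}"
      proof (cases "i \<in> Z"; cases "j \<in> Z")
        assume "i \<in> Z" "j \<in> Z" then show ?thesis using g(2) ij by (auto simp: A'_def inj_on_def)
      next
        assume "i \<in> Z" "j \<notin> Z" then show ?thesis using gD dec(1) ij by (auto simp: A'_def)
      next
        assume "i \<notin> Z" "j \<in> Z" then show ?thesis using gD dec(1) ij by (auto simp: A'_def)
      next
        assume "i \<notin> Z" "j \<notin> Z" then show ?thesis using dec(2) ij by (auto simp: A'_def)
      qed
    qed
    have d3: "(\<Union>i<k. A' i) = ?G \<union> F"
    proof
      show "(\<Union>i<k. A' i) \<subseteq> ?G \<union> F" using d1 by blast
      show "?G \<union> F \<subseteq> (\<Union>i<k. A' i)"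
      proof
        fix x assume "x \<in> ?G \<union> F"
        then show "x \<in> (\<Union>i<k. A' i)"
        proof
          assume "x \<in> ?G"
          then obtain i where "i < k" "x \<in> A i" using dec(3) by blast
          then show ?thesis using Zempty by (auto simp: A'_def split: if_splits)
        next
          assume "x \<in> F"
          then obtain i where "i \<in> Z" "x = g i" by (auto simp: F_def)
          then show ?thesis using Zk by (auto simp: A'_def)
        qed
      qed
    qed
    have d4: "\<forall>i<k. paths_cycles_union (A' i)"
      using dec(4) gD single_pcu[of _ mu n] by (auto simp: A'_def)
    have r: "\<forall>i<k. A' i \<inter> ?G = A i" using dec(1) gD Zempty by (auto simp: A'_def)
    have c: "\<forall>i<k. 1 \<le> card (A' i)"
    proof (intro allI impI)
      fix i assume "i < k"
      then show "1 \<le> card (A' i)" using finA[of i] by (cases "i \<in> Z") (auto simp: A'_def Z_def Suc_le_eq)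
    qed
    have s: "(\<forall>i<k. \<not> contains_cycle (A i)) \<longrightarrow> (\<forall>i<k. \<not> contains_cycle (A' i))"
      using single_nocycle by (auto simp: A'_def)
    have pd: "path_decomposition (?G \<union> F) k A'"
      unfolding path_decomposition_def decomposition_def using d1 d2 d3 d4 by blast
    have "F \<subseteq> Kn mu n - ?G" using g(1) by (simp add: F_def)
    then show ?thesis using pd r c s by blast
  qed
  show ?thesis
  proof (intro conjI impI)
    show "extendible 1 ?G (Kn mu n) k A \<longleftrightarrow> S_card 0 k A \<le> (mu - lam) * (n * (n - 1) div 2)"
    proof
      assume "extendible 1 ?G (Kn mu n) k A"
      from fwd[OF this] show "S_card 0 k A \<le> (mu - lam) * (n * (n - 1) div 2)" using SZ cD by simp
    next
      assume "S_card 0 k A \<le> (mu - lam) * (n * (n - 1) div 2)"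
      then have "card Z \<le> card ?D" using SZ cD by simp
      from bwd[OF this] show "extendible 1 ?G (Kn mu n) k A" unfolding extendible_def by blast
    qed
  next
    assume h: "strong_path_decomposition ?G k A \<and> S_card 0 k A \<le> (mu - lam) * (n * (n - 1) div 2)"
    then have "card Z \<le> card ?D" using SZ cD by simp
    from bwd[OF this] obtain F A' where "F \<subseteq> Kn mu n - ?G \<and> path_decomposition (?G \<union> F) k A' \<and>
     (\<forall>i<k. A' i \<inter> ?G = A i) \<and> (\<forall>i<k. 1 \<le> card (A' i)) \<and>
     ((\<forall>i<k. \<not> contains_cycle (A i)) \<longrightarrow> (\<forall>i<k. \<not> contains_cycle (A' i)))"
      by blast
    then show "strongly_extendible 1 ?G (Kn mu n) k A" using h
      unfolding strongly_extendible_def strong_path_decomposition_def by blast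
  qed
qed

end
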